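(* In the $xy$-plane, let an observer be at $(\cos\theta,\sin\theta)$ and let $\Omega(\theta)$ be the angle subtended at the observer by the segment $\{0\}\times[-1/2,1/2]$. Then $\Omega(\theta)=\arctan\!\big(\tfrac43|\cos\theta|\big)$, and if $\theta$ is uniformly distributed on $[0,2\pi)$, $$\mathbb{E}(\Omega)=\frac{1}{3\pi}\Big[\pi^2-6\ln(2)^2-3\,\mathrm{Li}_2\!\big(\tfrac14\big)\Big],\qquad \mathbb{E}(\Omega^2)=\mathrm{Li}_2\!\big(\tfrac14\big)-\mathrm{Li}_2\!\big(-\tfrac14\big),$$ and $\Omega$ has probability density function $$\frac{6}{\pi}\,\frac{1}{\cos(\omega)^2\sqrt{16-9\tan(\omega)^2}},\qquad 0<\omega<2\arctan\!\big(\tfrac12\big).$$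
   Context: $\mathrm{Li}_2(\xi)=\sum_{k\ge1}\xi^k/k^2$ is the dilogarithm. The angle subtended at a point $P$ by a segment $[U,V]$ is the angle $\angle UPV\in[0,\pi]$. *)

theory Defs
  imports "HOL-Probability.Probability"
begin

definition Li2 :: "real \<Rightarrow> real" where
  "Li2 \<xi> = (\<Sum>k. \<xi> ^ (k+1) / (real (k+1))^2)"

definition subtended_angle :: "real \<times> real \<Rightarrow> real \<times> real \<Rightarrow> real \<times> real \<Rightarrow> real" where
  "subtended_angle P U V =
     arccos (((U - P) \<bullet> (V - P)) / (norm (U - P) * norm (V - P)))"

definition Omega :: "real \<Rightarrow> real" where
  "Omega \<theta> = subtended_angle (cos \<theta>, sin \<theta>) (0, -1/2) (0, 1/2)"

definition theta_space :: "real measure" where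
  "theta_space = uniform_measure lborel {0..<2*pi}"

end

theory Submission
  imports Defs
begin


lemma Li2_summable: "\<bar>x\<bar> \<le> 1 \<Longrightarrow> summable (\<lambda>k. x^(k+1)/(real(k+1))^2)"
proof (rule summable_comparison_test[where g="\<lambda>k. 1/(real(k+1))^2"])
  assume "\<bar>x\<bar> \<le> 1"
  show "\<exists>N. \<forall>n\<ge>N. norm (x^(n+1)/(real(n+1))^2) \<le> 1/(real(n+1))^2"
  proof (intro exI allI impI)
    fix n :: nat
    have "\<bar>x^(n+1)\<bar> \<le> 1" using \<open>\<bar>x\<bar> \<le> 1\<close> by (metis power_abs power_le_one abs_ge_zero)
    then show "norm (x^(n+1)/(real(n+1))^2) \<le> 1/(real(n+1))^2"
      by (simp add: abs_divide divide_right_mono del: of_nat_Suc)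
  qed
  show "summable (\<lambda>k. 1/(real(k+1))^2)"
    using inverse_squares_sums by (simp add: sums_iff)
qed

lemma Li2_sums: "\<bar>x\<bar> \<le> 1 \<Longrightarrow> (\<lambda>k. x^(k+1)/(real(k+1))^2) sums Li2 x"
  unfolding Li2_def using Li2_summable summable_sums by blast

lemma Li2_1: "Li2 1 = pi^2/6"
  using inverse_squares_sums Li2_sums[of 1] by (simp add: sums_iff)

definition Lc :: "nat \<Rightarrow> real" where "Lc n = (if n = 0 then 0 else 1/(real n)^2)"

lemma Li2_ps: "\<bar>x\<bar> \<le> 1 \<Longrightarrow> (\<lambda>n. Lc n * x^n) sums Li2 x"
  using Li2_sums[of x] sums_Suc_iff[of "\<lambda>n. Lc n * x^n" "Li2 x"]
  by (simp add: Lc_def field_simps)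

lemma Li2_cont: "continuous_on {-1..1} Li2"
proof -
  have u: "uniform_limit {-1..1} (\<lambda>n x. \<Sum>i<n. x^(i+1)/(real(i+1))^2) (\<lambda>x. \<Sum>i. x^(i+1)/(real(i+1))^2) sequentially"
  proof (rule Weierstrass_m_test)
    show "summable (\<lambda>k. 1/(real(k+1))^2)"
      using inverse_squares_sums by (simp add: sums_iff)
    fix n and x :: real assume "x \<in> {-1..1}"
    then have "\<bar>x^(n+1)\<bar> \<le> 1" by (metis power_abs power_le_one abs_ge_zero abs_le_iff atLeastAtMost_iff minus_le_iff)
    then show "norm (x^(n+1)/(real(n+1))^2) \<le> 1/(real(n+1))^2"
      by (simp add: abs_divide divide_right_mono del: of_nat_Suc power_Suc)
  qed
  have "continuous_on {-1..1} (\<lambda>x. \<Sum>i. x^(i+1)/(real(i+1))^2)"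
    by (rule uniform_limit_theorem[OF _ u]) (auto intro!: always_eventually continuous_intros)
  then show ?thesis unfolding Li2_def .
qed

lemma Li2_deriv:
  assumes "0 < x" "x < 1"
  shows "(Li2 has_real_derivative (- ln (1-x) / x)) (at x)"
proof -
  have sL: "summable (\<lambda>n. Lc n * 1^n)" using Li2_ps[of 1] by (simp add: sums_iff)
  have d: "((\<lambda>x. \<Sum>n. Lc n * x^n) has_real_derivative (\<Sum>n. diffs Lc n * x^n)) (at x)"
    by (rule termdiffs_strong[OF sL]) (use assms in auto)
  have dc: "diffs Lc n = 1/real(n+1)" for n
    by (simp add: diffs_def Lc_def power2_eq_square del: of_nat_Suc)
  have sg: "summable (\<lambda>n. x^n/real(n+1))"
  proof (rule summable_comparison_test[where g="\<lambda>n. x^n"])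
    show "summable (\<lambda>n. x^n)" using assms by (simp add: summable_geometric)
    show "\<exists>N. \<forall>n\<ge>N. norm (x^n/real(n+1)) \<le> x^n"
      using assms by (auto simp: divide_le_eq)
  qed
  have "ln (1-x) = (\<Sum>n. (- 1) ^ n * (1 / real (n + 1)) * ((1-x) - 1) ^ Suc n)"
    using ln_series[of "1-x"] assms by simp
  also have "\<dots> = (\<Sum>n. - (x * (x^n/real(n+1))))"
    by (rule suminf_cong) (simp add: power_minus' field_simps)
  also have "\<dots> = - (x * (\<Sum>n. x^n/real(n+1)))"
    using suminf_minus[OF summable_mult[OF sg, of x]] suminf_mult[OF sg, of x] by simp
  finally have "(\<Sum>n. x^n/real(n+1)) = - ln(1-x)/x" using assms by (simp add: field_simps)
  with d dc have d2: "((\<lambda>x. \<Sum>n. Lc n * x^n) has_real_derivative (- ln(1-x)/x)) (at x)"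
    by (simp add: divide_inverse mult.commute)
  show ?thesis
  proof (rule has_field_derivative_transform_within_open[OF d2, where S="{-1<..<1}"])
    show "x \<in> {-1<..<1}" using assms by auto
    fix y :: real assume "y \<in> {-1<..<1}"
    then have "\<bar>y\<bar> \<le> 1" by auto
    then show "(\<Sum>n. Lc n * y^n) = Li2 y" using Li2_ps[of y] by (simp add: sums_iff)
  qed auto
qed

lemma lnln_lim: "((\<lambda>x::real. ln x * ln (1 - x)) \<longlongrightarrow> 0) (at_right 0)"
proof -
  have h1: "((\<lambda>x. ln (inverse x) / inverse x) \<longlongrightarrow> (0::real)) (at_right 0)"
    by (rule filterlim_compose[OF ln_x_over_x_tendsto_0 filterlim_inverse_at_top_right])
  have ev: "eventually (\<lambda>x. ln (inverse x) / inverse x = - (x * ln x)) (at_right (0::real))"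
    by (rule eventually_at_rightI[where b=1]) (auto simp: ln_inverse divide_inverse)
  have "((\<lambda>x. - (x * ln x)) \<longlongrightarrow> (0::real)) (at_right 0)"
    using tendsto_cong[OF ev] h1 by simp
  then have h2: "((\<lambda>x. x * ln x) \<longlongrightarrow> (0::real)) (at_right 0)"
    using tendsto_minus[of "\<lambda>x. - (x * ln x)" 0] by simp
  have g: "((\<lambda>x. 2 * \<bar>x * ln x\<bar>) \<longlongrightarrow> (0::real)) (at_right 0)"
    using tendsto_mult[OF tendsto_const tendsto_rabs[OF h2], of 2] by simp
  show ?thesis
  proof (rule Lim_null_comparison[OF _ g])
    show "eventually (\<lambda>x. norm (ln x * ln (1 - x)) \<le> 2 * \<bar>x * ln x\<bar>) (at_right (0::real))"
    proof (rule eventually_at_rightI[where b="1/2"])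
      fix x :: real assume x: "x \<in> {0<..<1/2}"
      have l1: "- x - 2 * x^2 \<le> ln (1 - x)" using x by (intro ln_one_minus_pos_lower_bound) auto
      have l2: "ln (1 - x) \<le> 0" using x by auto
      have "2 * x^2 \<le> x" using x by (simp add: power2_eq_square)
      then have "\<bar>ln (1 - x)\<bar> \<le> 2 * x" using l1 l2 by linarith
      then have "\<bar>ln x\<bar> * \<bar>ln (1 - x)\<bar> \<le> \<bar>ln x\<bar> * (2 * x)" by (rule mult_left_mono) simp
      then show "norm (ln x * ln (1 - x)) \<le> 2 * \<bar>x * ln x\<bar>"
        using x by (simp add: abs_mult mult_ac)
    qed simp
  qed
qed

lemma Li2_half: "Li2 (1/2) = pi^2/12 - (ln 2)^2/2"
proof -
  define F where "F x = Li2 x + Li2 (1-x) + ln x * ln (1-x)" for x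
  have "\<exists>c. \<forall>x\<in>{0<..<1}. F x = c"
  proof (rule has_field_derivative_zero_constant)
    fix x :: real assume x: "x \<in> {0<..<1}"
    have "(F has_real_derivative (- ln (1-x) / x + (- ln (1-(1-x)) / (1-x)) * (-1)
          + ((1/x) * ln (1-x) + ln x * (-1/(1-x))))) (at x)"
      unfolding F_def using x
      by (auto intro!: derivative_eq_intros DERIV_chain2[OF Li2_deriv] Li2_deriv)
    moreover have "- ln (1-x) / x + (- ln (1-(1-x)) / (1-x)) * (-1)
          + ((1/x) * ln (1-x) + ln x * (-1/(1-x))) = 0" by (simp add: field_simps)
    ultimately show "(F has_real_derivative 0) (at x within {0<..<1})"
      using has_field_derivative_at_within by metis
  qed auto
  then obtain c where c: "\<And>x. x\<in>{0<..<1} \<Longrightarrow> F x = c" by blast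
  have "(F \<longlongrightarrow> Li2 0 + Li2 (1-0) + 0) (at_right 0)"
    unfolding F_def
  proof (intro tendsto_add)
    show "(Li2 \<longlongrightarrow> Li2 0) (at_right 0)"
      by (rule continuous_on_tendsto_compose[OF Li2_cont, where g="\<lambda>x. x", simplified])
         (auto intro!: eventually_at_rightI[where b=1])
    show "((\<lambda>x. Li2 (1-x)) \<longlongrightarrow> Li2 (1-0)) (at_right 0)"
      by (rule continuous_on_tendsto_compose[OF Li2_cont])
         (auto intro!: eventually_at_rightI[where b=1] tendsto_eq_intros)
    show "((\<lambda>x::real. ln x * ln (1-x)) \<longlongrightarrow> 0) (at_right 0)"
      by (rule lnln_lim)
  qed
  moreover have "eventually (\<lambda>x. F x = c) (at_right 0)"
    by (rule eventually_at_rightI[where b=1]) (auto intro: c)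
  ultimately have "((\<lambda>x::real. c) \<longlongrightarrow> Li2 0 + Li2 1) (at_right 0)" using tendsto_cong by fastforce
  then have "c = Li2 0 + Li2 1" using tendsto_const_iff by (metis trivial_limit_at_right_real)
  moreover have "Li2 0 = 0" unfolding Li2_def by simp
  moreover have "F (1/2) = c" using c by auto
  ultimately have "2 * Li2 (1/2) + (ln (1/2))^2 = pi^2/6" unfolding F_def
    by (simp add: Li2_1 power2_eq_square)
  moreover have "ln (1/2::real) = - ln 2" by (simp add: ln_div)
  ultimately show ?thesis by simp
qed



lemma odd_part_sums:
  assumes "\<bar>x\<bar> \<le> 1"
  shows "(\<lambda>k. x^(2*k+1)/(real(2*k+1))^2) sums (Li2 x - Li2 (x^2)/4)"
proof -
  define f where "f n = x^(n+1)/(real(n+1))^2" for n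
  have "(\<lambda>n. sum f {n*2..<n*2+2}) sums Li2 x"
    using sums_group[OF Li2_sums[OF assms, folded f_def], of 2] by simp
  moreover have "sum f {n*2..<n*2+2} = x^(2*n+1)/(real(2*n+1))^2 + (x^2)^(n+1)/(real(n+1))^2/4" for n
  proof -
    have "{n*2..<n*2+2} = {2*n, 2*n+1}" by auto
    then have "sum f {n*2..<n*2+2} = f (2*n) + f (2*n+1)" by simp
    also have "f (2*n+1) = (x^2)^(n+1)/(real(n+1))^2/4"
    proof -
      have e1: "x^(2*n+1+1) = (x^2)^(n+1)" unfolding power_mult[symmetric] by (simp add: algebra_simps)
      have e2: "(real(2*n+1+1))^2 = 4*(real(n+1))^2" by (simp add: power2_eq_square algebra_simps)
      show ?thesis unfolding f_def e1 e2 by simp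
    qed
    finally show ?thesis by (simp add: f_def)
  qed
  ultimately have "(\<lambda>n. x^(2*n+1)/(real(2*n+1))^2 + (x^2)^(n+1)/(real(n+1))^2/4) sums Li2 x"
    by simp
  moreover have "(\<lambda>n. (x^2)^(n+1)/(real(n+1))^2/4) sums (Li2 (x^2)/4)"
    by (rule sums_divide[OF Li2_sums]) (use assms abs_le_square_iff[of x 1] in simp)
  ultimately show ?thesis using sums_diff by fastforce
qed

lemma odd_part_sums2:
  assumes "\<bar>x\<bar> \<le> 1"
  shows "(\<lambda>k. x^(2*k+1)/(real(2*k+1))^2) sums ((Li2 x - Li2 (-x))/2)"
proof -
  have a: "(\<lambda>k. x^(2*k+1)/(real(2*k+1))^2) sums (Li2 x - Li2 (x^2)/4)" by (rule odd_part_sums[OF assms])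
  have "(\<lambda>k. (-x)^(2*k+1)/(real(2*k+1))^2) sums (Li2 (-x) - Li2 ((-x)^2)/4)"
    by (rule odd_part_sums) (use assms in auto)
  then have b: "(\<lambda>k. - (x^(2*k+1)/(real(2*k+1))^2)) sums (Li2 (-x) - Li2 (x^2)/4)"
    by simp
  have "(\<lambda>k. x^(2*k+1)/(real(2*k+1))^2) sums (- (Li2 (-x) - Li2 (x^2)/4))"
    using sums_minus[OF b] by simp
  with a have "Li2 x - Li2 (x^2)/4 = - (Li2 (-x) - Li2 (x^2)/4)" using sums_unique2 by blast
  then have "(Li2 x - Li2 (-x))/2 = Li2 x - Li2 (x^2)/4" by (simp add: field_simps)
  then show ?thesis using a by (simp only:)
qed

lemma S_half: "(\<lambda>k. (1/2::real)^(2*k+1)/(real(2*k+1))^2) sums (pi^2/12 - (ln 2)^2/2 - Li2 (1/4)/4)"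
  using odd_part_sums[of "1/2"] by (simp add: Li2_half power2_eq_square)

lemma S_quarter: "(\<lambda>k. (1/4::real)^(2*k+1)/(real(2*k+1))^2) sums ((Li2 (1/4) - Li2 (-1/4))/2)"
  using odd_part_sums2[of "1/4"] by simp



definition gg :: "real \<Rightarrow> real" where "gg \<theta> = arctan (4/3 * cos \<theta>)"
definition cc :: "nat \<Rightarrow> real" where "cc k = 2 * ((-1)^k / real (2*k+1) * (1/2)^(2*k+1))"

lemma Re_Arctan_half:
  "2 * Re (Arctan (complex_of_real (1/2) * cis t)) = arctan (4/3 * cos t)"
proof -
  define x where "x = cos t / 2"
  define y where "y = sin t / 2"
  have xy: "x^2 + y^2 = 1/4" unfolding x_def y_def
    using sin_cos_squared_add[of t] by (simp add: power_divide field_simps)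
  have z: "complex_of_real (1/2) * cis t = Complex x y"
    by (simp add: complex_eq_iff x_def y_def)
  define a where "a = Complex (1+y) (-x)"
  define b where "b = Complex (1-y) x"
  have w: "(1 - \<i> * Complex x y) / (1 + \<i> * Complex x y) = a / b"
  proof -
    have "1 - \<i> * Complex x y = a" "1 + \<i> * Complex x y = b"
      by (simp_all add: a_def b_def complex_eq_iff)
    then show ?thesis by simp
  qed
  have bnz: "b \<noteq> 0"
  proof
    assume "b = 0"
    then have "y = 1" "x = 0" by (auto simp: b_def complex_eq_iff)
    with xy show False by simp
  qed
  have den: "Re a * Re b + Im a * Im b = 3/4"
    using xy by (simp add: a_def b_def power2_eq_square algebra_simps)
  have ReW: "Re (a/b) = (3/4) / (cmod b)^2"
    unfolding Re_divide den cmod_power2 by simp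
  have ImW: "Im (a/b) = (-2*x) / (cmod b)^2"
    by (simp add: Im_divide cmod_power2 a_def b_def algebra_simps)
  have nb: "(cmod b)^2 > 0" using bnz by simp
  have Rpos: "Re (a/b) > 0" using ReW nb by simp
  have "a/b \<noteq> 0" using Rpos by auto
  then have "Im (Ln (a/b)) = arctan (Im (a/b) / Re (a/b))"
    using Arg_eq_Im_Ln arg_conv_arctan[OF Rpos] by metis
  also have "Im (a/b) / Re (a/b) = - (4/3 * cos t)"
    using nb unfolding ReW ImW x_def by (simp add: field_simps)
  finally have "Im (Ln (a/b)) = - arctan (4/3 * cos t)" by (simp add: arctan_minus)
  moreover have "Re (Arctan (complex_of_real (1/2) * cis t)) = - Im (Ln (a/b)) / 2"
    unfolding z Arctan_def w by simp
  ultimately show ?thesis by simp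
qed

lemma gg_series: "(\<lambda>k. cc k * cos (real (2*k+1) * t)) sums gg t"
proof -
  define z where "z = complex_of_real (1/2) * cis t"
  have nz: "norm z < 1" by (simp add: z_def)
  have "(\<lambda>k. (-1)^k / of_nat (2*k+1) * z^(2*k+1)) sums Arctan z"
    using Arctan_series(2)[OF nz] by simp
  then have "(\<lambda>k. Re ((-1)^k / of_nat (2*k+1) * z^(2*k+1))) sums Re (Arctan z)"
    by (rule sums_Re)
  then have "(\<lambda>k. 2 * Re ((-1)^k / of_nat (2*k+1) * z^(2*k+1))) sums (2 * Re (Arctan z))"
    by (rule sums_mult)
  moreover have "2 * Re ((-1)^k / of_nat (2*k+1) * z^(2*k+1)) = cc k * cos (real (2*k+1) * t)" for k
  proof -
    have "z^(2*k+1) = complex_of_real ((1/2)^(2*k+1)) * cis (real (2*k+1) * t)"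
      unfolding z_def by (simp only: power_mult_distrib of_real_power[symmetric] Complex.DeMoivre)
    moreover have "((-1)^k / of_nat (2*k+1) :: complex) = complex_of_real ((-1)^k / real (2*k+1))"
      by simp
    ultimately have "(-1)^k / of_nat (2*k+1) * z^(2*k+1) =
        complex_of_real ((-1)^k / real (2*k+1) * (1/2)^(2*k+1)) * cis (real (2*k+1) * t)"
      by (simp only: of_real_mult mult.assoc)
    moreover have "Re (complex_of_real r * w) = r * Re w" for r w by simp
    ultimately show ?thesis unfolding cc_def by (simp only:) (simp add: mult.assoc)
  qed
  ultimately show ?thesis unfolding gg_def using Re_Arctan_half[of t] by (simp add: z_def)
qed



lemma termwise_integral:
  fixes f :: "nat \<Rightarrow> real \<Rightarrow> real"
  assumes ab: "a \<le> b"
    and s: "\<And>x. x\<in>{a..b} \<Longrightarrow> (\<lambda>k. f k x) sums h x"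
    and M: "\<And>k x. x\<in>{a..b} \<Longrightarrow> \<bar>f k x\<bar> \<le> M k" "summable M"
    and c: "\<And>k. continuous_on {a..b} (f k)"
    and I: "\<And>k. (f k has_integral I k) {a..b}"
  shows "\<exists>J. (h has_integral J) {a..b} \<and> I sums J"
proof -
  have u0: "uniform_limit {a..b} (\<lambda>n x. \<Sum>k<n. f k x) (\<lambda>x. \<Sum>k. f k x) sequentially"
    by (rule Weierstrass_m_test) (use M in auto)
  have u: "uniform_limit {a..b} (\<lambda>n x. \<Sum>k<n. f k x) h sequentially"
    using u0 by (rule uniform_limit_cong'[THEN iffD1, rotated -1]) (use s in \<open>auto simp: sums_iff\<close>)
  have cn: "\<And>n. continuous_on {a..b} (\<lambda>x. \<Sum>k<n. f k x)"
    using c by (intro continuous_intros) auto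
  obtain I' J where I': "\<And>n. ((\<lambda>x. \<Sum>k<n. f k x) has_integral I' n) {a..b}"
    and J: "(h has_integral J) {a..b}" and lim: "(I' \<longlongrightarrow> J) sequentially"
    using uniform_limit_integral[OF u cn] by auto
  have "I' n = (\<Sum>k<n. I k)" for n
    using has_integral_unique[OF I'[of n] has_integral_sum[OF _ I, of "{..<n}"]] by simp
  then have "I' = (\<lambda>n. \<Sum>k<n. I k)" by (rule ext)
  then have "I sums J" using lim unfolding sums_def by simp
  with J show ?thesis by blast
qed

lemma FTC_real:
  fixes F f :: "real \<Rightarrow> real"
  assumes "a \<le> b" "\<And>x. x \<in> {a..b} \<Longrightarrow> (F has_real_derivative f x) (at x)"
  shows "(f has_integral (F b - F a)) {a..b}"
  by (rule fundamental_theorem_of_calculus[OF assms(1)])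
     (use assms(2) in \<open>auto simp: has_real_derivative_iff_has_vector_derivative[symmetric]
        intro: has_field_derivative_at_within\<close>)

lemma int_cos:
  fixes a b m :: real
  assumes "a \<le> b" "m \<noteq> 0"
  shows "((\<lambda>x. cos (m * x)) has_integral ((sin (m*b) - sin (m*a)) / m)) {a..b}"
proof -
  have "((\<lambda>x. cos (m * x)) has_integral (sin (m*b)/m - sin (m*a)/m)) {a..b}"
    by (rule FTC_real[OF assms(1), where F="\<lambda>x. sin (m*x)/m"])
       (use assms in \<open>auto intro!: derivative_eq_intros\<close>)
  then show ?thesis by (simp add: diff_divide_distrib)
qed

lemma sin_2pi_int: "sin (of_int j * (2*pi)) = 0"
  using sin_npi_int[of "2*j"] by (simp add: mult_ac)

lemma orth:
  fixes m n :: nat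
  assumes "m > 0" "n > 0"
  shows "((\<lambda>x. cos (real m * x) * cos (real n * x)) has_integral (if m = n then pi else 0)) {0..2*pi}"
proof (cases "m = n")
  case True
  define F where "F x = x/2 + sin (2 * real m * x) / (4 * real m)" for x
  have "((\<lambda>x. cos (real m * x) * cos (real n * x)) has_integral (F (2*pi) - F 0)) {0..2*pi}"
  proof (rule FTC_real)
    fix x :: real
    have "(F has_real_derivative (1/2 + cos (2 * real m * x) * (2 * real m) / (4 * real m))) (at x)"
      unfolding F_def by (auto intro!: derivative_eq_intros)
    moreover have "1/2 + cos (2 * real m * x) * (2 * real m) / (4 * real m) = cos (real m * x) * cos (real n * x)"
      using True assms cos_times_cos[of "real m * x" "real m * x"] by (simp add: field_simps)
    ultimately show "(F has_real_derivative cos (real m * x) * cos (real n * x)) (at x)" by simp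
  qed simp
  moreover have "F (2*pi) - F 0 = pi"
    using sin_2pi_int[of "2 * int m"] by (simp add: F_def mult_ac)
  ultimately show ?thesis using True by simp
next
  case False
  define d where "d = real m - real n"
  define e where "e = real m + real n"
  have d0: "d \<noteq> 0" using False by (simp add: d_def)
  have e0: "e \<noteq> 0" using assms by (simp add: e_def)
  define F where "F x = sin (d * x) / (2*d) + sin (e * x) / (2*e)" for x
  have "((\<lambda>x. cos (real m * x) * cos (real n * x)) has_integral (F (2*pi) - F 0)) {0..2*pi}"
  proof (rule FTC_real)
    fix x :: real
    have "(F has_real_derivative (cos (d*x) * d / (2*d) + cos (e*x) * e / (2*e))) (at x)"
      unfolding F_def by (auto intro!: derivative_eq_intros)
    moreover have "cos (d*x) * d / (2*d) + cos (e*x) * e / (2*e) = cos (d*x)/2 + cos (e*x)/2"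
      using d0 e0 by simp
    moreover have "cos (d*x)/2 + cos (e*x)/2 = cos (real m * x) * cos (real n * x)"
      using cos_times_cos[of "real m * x" "real n * x"]
      by (simp add: d_def e_def algebra_simps)
    ultimately show "(F has_real_derivative cos (real m * x) * cos (real n * x)) (at x)" by metis
  qed simp
  moreover have "F (2*pi) - F 0 = 0"
  proof -
    have "sin (d * (2*pi)) = 0" using sin_2pi_int[of "int m - int n"] by (simp add: d_def)
    moreover have "sin (e * (2*pi)) = 0" using sin_2pi_int[of "int m + int n"] by (simp add: e_def)
    ultimately show ?thesis by (simp add: F_def mult_ac)
  qed
  ultimately show ?thesis using False by simp
qed



lemma Omega_eq: "Omega t = arctan (4/3 * \<bar>cos t\<bar>)"
proof -
  define c where "c = cos t"
  define s where "s = sin t"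
  have cs: "c^2 + s^2 = 1" unfolding c_def s_def by simp
  define X where "X = 1 + (4/3 * \<bar>c\<bar>)^2"
  have X: "(5/4 + s) * (5/4 - s) = (3/4)^2 * X"
  proof -
    have "(4/3 * \<bar>c\<bar>)^2 = 16/9 * c^2" by (simp add: power2_eq_square abs_mult_self_eq)
    then show ?thesis unfolding X_def using cs by (simp add: power2_eq_square algebra_simps)
  qed
  have Xp: "X > 0" unfolding X_def by (simp add: add_pos_nonneg)
  have s1: "\<bar>s\<bar> \<le> 1" unfolding s_def by simp
  have dot: "((0, -1/2) - (c, s)) \<bullet> ((0, 1/2) - (c, s)) = (3/4::real)"
    using cs by (simp add: inner_Pair power2_eq_square algebra_simps)
  have n1: "norm ((0::real, -1/2::real) - (c, s)) = sqrt (5/4 + s)"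
    using cs by (simp add: norm_Pair power2_eq_square algebra_simps)
  have n2: "norm ((0::real, 1/2::real) - (c, s)) = sqrt (5/4 - s)"
    using cs by (simp add: norm_Pair power2_eq_square algebra_simps)
  have "sqrt (5/4 + s) * sqrt (5/4 - s) = sqrt ((3/4)^2 * X)"
    by (simp only: real_sqrt_mult[symmetric] X)
  also have "\<dots> = (3/4) * sqrt X" by (simp add: real_sqrt_mult)
  finally have "sqrt (5/4 + s) * sqrt (5/4 - s) = (3/4) * sqrt X" .
  then have arg: "((0, -1/2) - (c, s)) \<bullet> ((0, 1/2) - (c, s)) /
      (norm ((0::real, -1/2::real) - (c, s)) * norm ((0::real, 1/2::real) - (c, s))) = 1 / sqrt X"
    unfolding dot n1 n2 using Xp by (simp add: field_simps)
  have "cos (arctan (4/3 * \<bar>c\<bar>)) = 1 / sqrt X" unfolding X_def by (simp add: cos_arctan)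
  moreover have "0 \<le> arctan (4/3 * \<bar>c\<bar>)" by (simp add: zero_le_arctan_iff)
  moreover have "arctan (4/3 * \<bar>c\<bar>) \<le> pi" using arctan_bounded[of "4/3 * \<bar>c\<bar>"] by simp
  ultimately have "arccos (1 / sqrt X) = arctan (4/3 * \<bar>c\<bar>)" using arccos_cos by metis
  then show ?thesis unfolding Omega_def subtended_angle_def
    using arg by (simp add: c_def s_def)
qed

lemma Omega_fun: "Omega = (\<lambda>t. arctan (4/3 * \<bar>cos t\<bar>))"
  using Omega_eq by auto

lemma theta_integral:
  fixes f :: "real \<Rightarrow> real"
  assumes c: "continuous_on UNIV f" and nn: "\<And>x. 0 \<le> f x"
    and I: "(f has_integral I) {0..2*pi}"
  shows "integral\<^sup>L theta_space f = I / (2*pi)"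
proof -
  have fm: "f \<in> borel_measurable borel" using c by (rule borel_measurable_continuous_onI)
  have I0: "0 \<le> I" using has_integral_nonneg[OF I] nn by blast
  have I': "(f has_integral I) {0..<2*pi}"
  proof (rule has_integral_spike_set_eq[THEN iffD1, OF _ _ I])
    show "negligible {x \<in> {0..2*pi} - {0..<2*pi}. f x \<noteq> 0}"
      by (rule negligible_subset[of "{2*pi}"]) auto
    show "negligible {x \<in> {0..<2*pi} - {0..2*pi}. f x \<noteq> 0}"
      by (rule negligible_subset[of "{}"]) auto
  qed
  have U: "((\<lambda>x. f x * indicator {0..<2*pi} x) has_integral I) UNIV"
  proof -
    have "(\<lambda>x. if x \<in> {0..<2*pi} then f x else 0) = (\<lambda>x. f x * indicator {0..<2*pi} x)"
      by (auto simp: indicator_def)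
    then show ?thesis using I' has_integral_restrict_UNIV by metis
  qed
  have nnI: "(\<integral>\<^sup>+x. ennreal (f x * indicator {0..<2*pi} x) \<partial>lborel) = ennreal I"
    by (rule nn_integral_has_integral_lborel[OF _ _ U]) (use fm nn in auto)
  have fm2: "f \<in> borel_measurable theta_space"
    using fm unfolding theta_space_def by (simp add: measurable_cong_sets[OF sets_uniform_measure refl])
  have "integral\<^sup>L theta_space f = enn2real (\<integral>\<^sup>+ x. ennreal (f x) \<partial>theta_space)"
    by (rule integral_eq_nn_integral[OF fm2]) (use nn in auto)
  also have "(\<integral>\<^sup>+ x. ennreal (f x) \<partial>theta_space) =
      (\<integral>\<^sup>+x. ennreal (f x) * indicator {0..<2*pi} x \<partial>lborel) / emeasure lborel {0..<2*pi}"
    unfolding theta_space_def by (rule nn_integral_uniform_measure) (use fm in auto)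
  also have "(\<integral>\<^sup>+x. ennreal (f x) * indicator {0..<2*pi} x \<partial>lborel) = ennreal I"
    unfolding nnI[symmetric] by (rule nn_integral_cong) (auto simp: indicator_def)
  also have "emeasure lborel {0..<2*pi} = ennreal (2*pi)" by simp
  also have "ennreal I / ennreal (2*pi) = ennreal (I / (2*pi))" by (rule divide_ennreal) (use I0 in auto)
  finally show ?thesis using I0 by simp
qed



lemma cc_bound: "\<bar>cc k\<bar> \<le> (1/2)^k"
proof -
  have "\<bar>cc k\<bar> = \<bar>2\<bar> * (\<bar>-1\<bar>^k / \<bar>real (2*k+1)\<bar> * \<bar>1/2\<bar>^(2*k+1))"
    by (simp only: cc_def abs_mult abs_divide power_abs)
  also have "\<dots> = 2 * (1 / real (2*k+1) * (1/2)^(2*k+1))" by simp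
  also have "\<dots> \<le> 2 * (1/2)^(2*k+1)"
    by (intro mult_left_mono mult_left_le_one_le) auto
  also have "\<dots> = (1/2)^(2*k)" by simp
  also have "\<dots> \<le> (1/2)^k" by (rule power_decreasing) auto
  finally show ?thesis .
qed

lemma cc_summable: "summable (\<lambda>k. \<bar>cc k\<bar>)"
  by (rule summable_comparison_test[OF _ summable_geometric[of "1/2::real"]]) (use cc_bound in auto)

lemma gg_cont: "continuous_on UNIV gg"
  unfolding gg_def by (intro continuous_intros)

lemma gg_bound: "\<bar>gg x\<bar> \<le> 2"
  using arctan_bounded[of "4/3 * cos x"] pi_less_4 unfolding gg_def by linarith

lemma int_gg_cos:
  "((\<lambda>x. gg x * cos (real (2*k+1) * x)) has_integral (pi * cc k)) {0..2*pi}"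
proof -
  have "\<exists>J. ((\<lambda>x. gg x * cos (real (2*k+1) * x)) has_integral J) {0..2*pi} \<and>
     (\<lambda>j. cc j * (if 2*j+1 = 2*k+1 then pi else 0)) sums J"
  proof (rule termwise_integral[where f="\<lambda>j x. cc j * cos (real (2*j+1) * x) * cos (real (2*k+1) * x)"
        and M="\<lambda>j. \<bar>cc j\<bar>"])
    fix x show "(\<lambda>j. cc j * cos (real (2*j+1) * x) * cos (real (2*k+1) * x)) sums (gg x * cos (real (2*k+1) * x))"
      by (rule sums_mult2[OF gg_series])
  next
    fix j x
    have "\<bar>cos (real (2*j+1) * x)\<bar> * \<bar>cos (real (2*k+1) * x)\<bar> \<le> 1"
      by (rule mult_le_one) auto
    then show "\<bar>cc j * cos (real (2*j+1) * x) * cos (real (2*k+1) * x)\<bar> \<le> \<bar>cc j\<bar>"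
      by (simp add: abs_mult mult_left_le mult.assoc)
  next
    fix j
    show "((\<lambda>x. cc j * cos (real (2*j+1) * x) * cos (real (2*k+1) * x)) has_integral
        cc j * (if 2*j+1 = 2*k+1 then pi else 0)) {0..2*pi}"
      using has_integral_mult_right[OF orth[of "2*j+1" "2*k+1"], of "cc j"] by (simp add: mult.assoc)
  qed (auto intro!: continuous_intros cc_summable)
  then obtain J where J: "((\<lambda>x. gg x * cos (real (2*k+1) * x)) has_integral J) {0..2*pi}"
    and s: "(\<lambda>j. cc j * (if 2*j+1 = 2*k+1 then pi else 0)) sums J" by blast
  have "(\<lambda>j. cc j * (if 2*j+1 = 2*k+1 then pi else 0)) = (\<lambda>j. if j = k then cc j * pi else 0)"
    by auto
  then have "J = cc k * pi" using s sums_single[of k "\<lambda>j. cc j * pi"] sums_unique2 by metis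
  with J show ?thesis by (simp add: mult.commute)
qed

lemma int_gg2: "\<exists>J. ((\<lambda>x. (gg x)^2) has_integral J) {0..2*pi} \<and> (\<lambda>k. pi * (cc k)^2) sums J"
proof -
  have "\<exists>J. ((\<lambda>x. gg x * gg x) has_integral J) {0..2*pi} \<and> (\<lambda>k. cc k * (pi * cc k)) sums J"
  proof (rule termwise_integral[where f="\<lambda>k x. cc k * (gg x * cos (real (2*k+1) * x))"
        and M="\<lambda>k. 2 * \<bar>cc k\<bar>"])
    fix x show "(\<lambda>k. cc k * (gg x * cos (real (2*k+1) * x))) sums (gg x * gg x)"
      using sums_mult[OF gg_series[of x], of "gg x"] by (simp add: mult_ac)
  next
    fix k x
    have "\<bar>gg x * cos (real (2*k+1) * x)\<bar> \<le> 2"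
      using mult_mono[OF gg_bound[of x] abs_cos_le_one[of "real (2*k+1) * x"]] by (simp add: abs_mult)
    then show "\<bar>cc k * (gg x * cos (real (2*k+1) * x))\<bar> \<le> 2 * \<bar>cc k\<bar>"
      by (simp add: abs_mult mult_left_mono mult.commute)
  next
    fix k show "((\<lambda>x. cc k * (gg x * cos (real (2*k+1) * x))) has_integral cc k * (pi * cc k)) {0..2*pi}"
      by (rule has_integral_mult_right[OF int_gg_cos])
  next
    show "summable (\<lambda>k. 2 * \<bar>cc k\<bar>)" using cc_summable by (rule summable_mult)
  qed (auto intro!: continuous_intros continuous_on_compose2[OF gg_cont])
  then show ?thesis by (simp add: power2_eq_square mult_ac)
qed

lemma int_gg_ab:
  assumes "a \<le> b"
  shows "\<exists>J. (gg has_integral J) {a..b} \<and>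
    (\<lambda>k. cc k * ((sin (real (2*k+1) * b) - sin (real (2*k+1) * a)) / real (2*k+1))) sums J"
proof (rule termwise_integral[where f="\<lambda>k x. cc k * cos (real (2*k+1) * x)" and M="\<lambda>k. \<bar>cc k\<bar>"])
  fix k x show "\<bar>cc k * cos (real (2*k+1) * x)\<bar> \<le> \<bar>cc k\<bar>"
    by (simp add: abs_mult mult_le_one mult_left_le)
next
  fix k show "((\<lambda>x. cc k * cos (real (2*k+1) * x)) has_integral
     cc k * ((sin (real (2*k+1) * b) - sin (real (2*k+1) * a)) / real (2*k+1))) {a..b}"
    by (rule has_integral_mult_right[OF int_cos]) (use assms in auto)
qed (use assms gg_series cc_summable in \<open>auto intro!: continuous_intros\<close>)



lemma sin_half: "sin (real (2*k+1) * (pi/2)) = (-1)^k"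
proof -
  have e: "real (2*k+1) * (pi/2) = real k * pi + pi/2" by (simp add: algebra_simps)
  show ?thesis by (simp only: e sin_add sin_npi cos_npi sin_pi_half cos_pi_half mult_1_right mult_zero_right add_0_right)
qed

lemma sin_3half: "sin (real (2*k+1) * (3*pi/2)) = - ((-1)^k)"
proof -
  have "real (2*k+1) * (3*pi/2) = real (3*k+1) * pi + pi/2" by (simp add: algebra_simps)
  then have "sin (real (2*k+1) * (3*pi/2)) = (-1)^(3*k+1)" by (simp only: sin_add cos_npi) simp
  also have "(-1::real)^(3*k+1) = - ((-1)^k)" by (simp add: power_mult power_add)
  finally show ?thesis .
qed

lemma sin_2pi': "sin (real (2*k+1) * (2*pi)) = 0"
  using sin_2pi_int[of "int (2*k+1)"] by simp

definition dd :: "nat \<Rightarrow> real" where "dd k = 2 * ((1/2)^(2*k+1) / (real (2*k+1))^2)"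

lemma cc_dd_aux:
  fixes h r :: real assumes "r \<noteq> 0"
  shows "2 * ((-1)^k / r * h) * (-1)^k / r = 2 * (h / r^2)"
proof -
  have m: "(-1::real)^k * (-1)^k = 1" by (simp flip: power_add)
  have "2 * ((-1)^k / r * h) * (-1)^k / r = 2 * ((-1)^k * (-1)^k) * h / (r * r)"
    by (simp add: field_simps)
  then show ?thesis unfolding m using assms by (simp add: power2_eq_square)
qed

lemma cc_dd: "cc k * (-1)^k / real (2*k+1) = dd k"
  unfolding cc_def dd_def by (rule cc_dd_aux) simp

definition sA :: real where "sA = pi^2/12 - (ln 2)^2/2 - Li2 (1/4)/4"

lemma dd_sums: "dd sums (2 * sA)"
  unfolding dd_def sA_def by (rule sums_mult[OF S_half])

lemma Omega_abs: "Omega x = \<bar>gg x\<bar>"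
  unfolding Omega_eq gg_def
  by (cases "cos x \<ge> 0") (auto simp: arctan_minus[symmetric] zero_le_arctan_iff)

lemma Omega_pos: "cos x \<ge> 0 \<Longrightarrow> Omega x = gg x"
  unfolding Omega_eq gg_def by simp

lemma Omega_neg: "cos x \<le> 0 \<Longrightarrow> Omega x = - gg x"
  unfolding Omega_eq gg_def by (simp add: arctan_minus[symmetric])

lemma mean_integral: "(Omega has_integral (8 * sA)) {0..2*pi}"
proof -
  obtain J1 where J1: "(gg has_integral J1) {0..pi/2}"
    and s1: "(\<lambda>k. cc k * ((sin (real (2*k+1) * (pi/2)) - sin (real (2*k+1) * 0)) / real (2*k+1))) sums J1"
    using int_gg_ab[of 0 "pi/2"] by auto
  have "(\<lambda>k. cc k * ((sin (real (2*k+1) * (pi/2)) - sin (real (2*k+1) * 0)) / real (2*k+1))) = dd"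
    by (rule ext) (simp only: sin_half mult_zero_right sin_zero diff_zero, simp only: times_divide_eq_right cc_dd)
  with s1 dd_sums have e1: "J1 = 2* sA" using sums_unique2 by metis
  obtain J2 where J2: "(gg has_integral J2) {pi/2..3*pi/2}"
    and s2: "(\<lambda>k. cc k * ((sin (real (2*k+1) * (3*pi/2)) - sin (real (2*k+1) * (pi/2))) / real (2*k+1))) sums J2"
    using int_gg_ab[of "pi/2" "3*pi/2"] by auto
  have "(\<lambda>k. cc k * ((sin (real (2*k+1) * (3*pi/2)) - sin (real (2*k+1) * (pi/2))) / real (2*k+1))) = (\<lambda>k. -2 * dd k)"
  proof
    fix k
    have "cc k * ((- ((-1)^k) - (-1)^k) / real (2*k+1)) = -2 * (cc k * (-1)^k / real (2*k+1))"
      by (simp add: field_simps)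
    then show "cc k * ((sin (real (2*k+1) * (3*pi/2)) - sin (real (2*k+1) * (pi/2))) / real (2*k+1)) = -2 * dd k"
      by (simp only: sin_half sin_3half cc_dd)
  qed
  with s2 sums_mult[OF dd_sums, of "-2"] have e2: "J2 = -2 * (2* sA)" using sums_unique2 by metis
  obtain J3 where J3: "(gg has_integral J3) {3*pi/2..2*pi}"
    and s3: "(\<lambda>k. cc k * ((sin (real (2*k+1) * (2*pi)) - sin (real (2*k+1) * (3*pi/2))) / real (2*k+1))) sums J3"
    using int_gg_ab[of "3*pi/2" "2*pi"] by auto
  have "(\<lambda>k. cc k * ((sin (real (2*k+1) * (2*pi)) - sin (real (2*k+1) * (3*pi/2))) / real (2*k+1))) = dd"
  proof
    fix k
    have "cc k * ((0 - - ((-1)^k)) / real (2*k+1)) = cc k * (-1)^k / real (2*k+1)"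
      by simp
    then show "cc k * ((sin (real (2*k+1) * (2*pi)) - sin (real (2*k+1) * (3*pi/2))) / real (2*k+1)) = dd k"
      by (simp only: sin_2pi' sin_3half cc_dd)
  qed
  with s3 dd_sums have e3: "J3 = 2* sA" using sums_unique2 by metis
  have O1: "(Omega has_integral J1) {0..pi/2}"
    by (rule has_integral_eq[OF _ J1]) (auto intro!: Omega_pos[symmetric] cos_ge_zero)
  have O2: "(Omega has_integral (-J2)) {pi/2..3*pi/2}"
  proof (rule has_integral_eq[OF _ has_integral_neg[OF J2]])
    fix x :: real assume x: "x \<in> {pi/2..3*pi/2}"
    have "cos (x - pi) \<ge> 0" by (rule cos_ge_zero) (use x in auto)
    then have "cos x \<le> 0" by (simp add: cos_diff)
    then show "- gg x = Omega x" by (simp add: Omega_neg)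
  qed
  have O3: "(Omega has_integral J3) {3*pi/2..2*pi}"
  proof (rule has_integral_eq[OF _ J3])
    fix x :: real assume x: "x \<in> {3*pi/2..2*pi}"
    have "cos (x - 2*pi) \<ge> 0" by (rule cos_ge_zero) (use x in auto)
    then have "cos x \<ge> 0" by (simp add: cos_diff)
    then show "gg x = Omega x" by (simp add: Omega_pos)
  qed
  have "(Omega has_integral (J1 + -J2)) {0..3*pi/2}"
    by (rule has_integral_combine[OF _ _ O1 O2]) auto
  then have "(Omega has_integral (J1 + -J2 + J3)) {0..2*pi}"
    using has_integral_combine[of 0 "3*pi/2" "2*pi" Omega "J1 + -J2" J3] O3 by simp
  then show ?thesis using e1 e2 e3 by simp
qed

lemma Omega_cont: "continuous_on UNIV Omega"
  unfolding Omega_fun by (intro continuous_intros)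

lemma Omega_nn: "0 \<le> Omega x"
  unfolding Omega_abs by simp

lemma mean_result: "integral\<^sup>L theta_space Omega = 1 / (3*pi) * (pi^2 - 6 * (ln 2)^2 - 3 * Li2 (1/4))"
proof -
  have "integral\<^sup>L theta_space Omega = 8 * sA / (2*pi)"
    by (rule theta_integral[OF Omega_cont Omega_nn mean_integral])
  then show ?thesis unfolding sA_def by (simp add: field_simps)
qed

lemma second_result: "integral\<^sup>L theta_space (\<lambda>\<theta>. (Omega \<theta>)^2) = Li2 (1/4) - Li2 (-1/4)"
proof -
  obtain J where J: "((\<lambda>x. (gg x)^2) has_integral J) {0..2*pi}" and s: "(\<lambda>k. pi * (cc k)^2) sums J"
    using int_gg2 by blast
  have "(\<lambda>k. pi * (cc k)^2) = (\<lambda>k. (4*pi) * ((1/4::real)^(2*k+1)/(real(2*k+1))^2))"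
  proof
    fix k
    have "(cc k)^2 = 4 * (((-1)^k)^2 / (real (2*k+1))^2 * ((1/2)^(2*k+1))^2)"
      unfolding cc_def by (simp add: power_mult_distrib power_divide)
    also have "((1/2::real)^(2*k+1))^2 = (1/4)^(2*k+1)"
      by (simp add: power_mult_distrib[symmetric] power2_eq_square)
    also have "((-1::real)^k)^2 = 1" by (simp flip: power_mult)
    finally show "pi * (cc k)^2 = (4*pi) * ((1/4::real)^(2*k+1)/(real(2*k+1))^2)" by simp
  qed
  with s sums_mult[OF S_quarter, of "4*pi"] have eJ: "J = 4*pi * ((Li2 (1/4) - Li2 (-1/4))/2)"
    using sums_unique2 by metis
  have J': "((\<lambda>x. (Omega x)^2) has_integral J) {0..2*pi}"
    using J by (simp add: Omega_abs)
  have "integral\<^sup>L theta_space (\<lambda>\<theta>. (Omega \<theta>)^2) = J / (2*pi)"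
    by (rule theta_integral[OF _ _ J']) (auto intro!: continuous_intros Omega_cont)
  then show ?thesis using eJ by simp
qed



lemma cos_lt_iff:
  assumes "0 \<le> u" "u \<le> pi/2" "0 \<le> a" "a \<le> pi/2"
  shows "cos a < cos u \<longleftrightarrow> u < a"
  using cos_mono_less_eq[of a u] assms by auto

lemma cos_abs_set:
  assumes a: "0 < a" "a \<le> pi/2"
  shows "{t \<in> {0..<2*pi}. cos a < \<bar>cos t\<bar>} = {0..<a} \<union> {pi-a<..<pi+a} \<union> {2*pi-a<..<2*pi}"
proof (rule set_eqI)
  fix t :: real
  have pi0: "0 < pi" by simp
  show "t \<in> {t \<in> {0..<2*pi}. cos a < \<bar>cos t\<bar>} \<longleftrightarrow> t \<in> {0..<a} \<union> {pi-a<..<pi+a} \<union> {2*pi-a<..<2*pi}"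
  proof (cases "0 \<le> t \<and> t < 2*pi")
    case False then show ?thesis using a pi0 by auto
  next
    case True
    consider "t \<le> pi/2" | "pi/2 \<le> t \<and> t \<le> pi" | "pi \<le> t \<and> t \<le> 3*pi/2" | "3*pi/2 \<le> t" by linarith
    then show ?thesis
    proof cases
      case 1
      have "cos t \<ge> 0" by (rule cos_ge_zero) (use True 1 in auto)
      then have "\<bar>cos t\<bar> = cos t" by simp
      moreover have "cos a < cos t \<longleftrightarrow> t < a" by (rule cos_lt_iff) (use True 1 a in auto)
      ultimately show ?thesis using True 1 a pi0 by auto
    next
      case 2
      have "cos (pi - t) \<ge> 0" by (rule cos_ge_zero) (use 2 in auto)
      then have "\<bar>cos t\<bar> = cos (pi - t)" by (simp add: cos_diff)
      moreover have "cos a < cos (pi - t) \<longleftrightarrow> pi - t < a" by (rule cos_lt_iff) (use 2 a in auto)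
      ultimately show ?thesis using True 2 a pi0 by auto
    next
      case 3
      have "cos (t - pi) \<ge> 0" by (rule cos_ge_zero) (use 3 in auto)
      then have "\<bar>cos t\<bar> = cos (t - pi)" by (simp add: cos_diff)
      moreover have "cos a < cos (t - pi) \<longleftrightarrow> t - pi < a" by (rule cos_lt_iff) (use 3 a in auto)
      ultimately show ?thesis using True 3 a pi0 by auto
    next
      case 4
      have "cos (2*pi - t) \<ge> 0" by (rule cos_ge_zero) (use True 4 in auto)
      then have "\<bar>cos t\<bar> = cos (2*pi - t)" by (simp add: cos_diff)
      moreover have "cos a < cos (2*pi - t) \<longleftrightarrow> 2*pi - t < a" by (rule cos_lt_iff) (use True 4 a in auto)
      ultimately show ?thesis using True 4 a pi0 by auto
    qed
  qed
qed

lemma measure_cos_abs_set: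
  assumes a: "0 < a" "a \<le> pi/2"
  shows "emeasure lborel ({0..<a} \<union> {pi-a<..<pi+a} \<union> {2*pi-a<..<2*pi}) = ennreal (4*a)"
proof -
  have "emeasure lborel ({0..<a} \<union> {pi-a<..<pi+a} \<union> {2*pi-a<..<2*pi}) =
      emeasure lborel ({0..<a} \<union> {pi-a<..<pi+a}) + emeasure lborel {2*pi-a<..<2*pi}"
    by (rule plus_emeasure[symmetric]) (use a in auto)
  also have "emeasure lborel ({0..<a} \<union> {pi-a<..<pi+a}) = emeasure lborel {0..<a} + emeasure lborel {pi-a<..<pi+a}"
    by (rule plus_emeasure[symmetric]) (use a in auto)
  also have "emeasure lborel {0..<a} + emeasure lborel {pi-a<..<pi+a} + emeasure lborel {2*pi-a<..<2*pi}
      = ennreal a + ennreal (2*a) + ennreal a" using a by simp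
  also have "\<dots> = ennreal (4*a)" using a by (simp flip: ennreal_plus)
  finally show ?thesis .
qed

lemma U_eq: "2 * arctan (1/2) = arctan (4/3)"
  using arctan_add[of "1/2" "1/2"] by simp



definition dens :: "real \<Rightarrow> real" where
  "dens w = 6/pi * (1 / ((cos w)^2 * sqrt (16 - 9 * (tan w)^2)))"
definition Fcdf :: "real \<Rightarrow> real" where
  "Fcdf w = - (2/pi) * arccos (3/4 * tan w)"

lemma U_props: "0 < arctan (4/3::real)" "arctan (4/3::real) < pi/2" "tan (arctan (4/3::real)) = 4/3"
  using arctan_bounded[of "4/3"] by (auto simp: tan_arctan)

lemma tan_range:
  assumes "0 \<le> w" "w < arctan (4/3)"
  shows "0 \<le> tan w" "tan w < 4/3" "cos w > 0"
proof -
  have w2: "w < pi/2" using assms U_props by linarith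
  show "cos w > 0" using assms w2 by (intro cos_gt_zero_pi) auto
  show "0 \<le> tan w"
  proof (cases "w = 0")
    case False
    then show ?thesis using assms w2 by (intro less_imp_le[OF tan_gt_zero]) auto
  qed simp
  have "arctan (tan w) = w" using assms w2 by (intro arctan_tan) auto
  then show "tan w < 4/3" using assms arctan_less_iff by metis
qed

lemma Fcdf_deriv:
  assumes "0 < w" "w < arctan (4/3)"
  shows "(Fcdf has_real_derivative dens w) (at w)"
proof -
  note tr = tan_range[of w]
  have t0: "0 \<le> tan w" "tan w < 4/3" "cos w > 0" using tr assms by auto
  define u where "u = 3/4 * tan w"
  have u: "-1 < u" "u < 1" "0 \<le> u" using t0 by (auto simp: u_def)
  have aux: "- 4 < 3 * tan w" "3 * tan w < 4" "cos w \<noteq> 0" using t0 by auto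
  have "(Fcdf has_real_derivative (- (2/pi) * (inverse (- sqrt (1 - u^2)) * (3/4 * inverse ((cos w)^2))))) (at w)"
    unfolding Fcdf_def
    by (auto intro!: derivative_eq_intros DERIV_chain2[OF DERIV_arccos] simp: u_def u[unfolded u_def] t0 aux)
  moreover have "- (2/pi) * (inverse (- sqrt (1 - u^2)) * (3/4 * inverse ((cos w)^2))) = dens w"
  proof -
    have e: "16 - 9 * (tan w)^2 = 4^2 * (1 - u^2)" by (simp add: u_def power2_eq_square)
    have "sqrt (4^2 * (1 - u^2)) = 4 * sqrt (1 - u^2)" by (simp only: real_sqrt_mult real_sqrt_abs abs_numeral)
    then have s: "sqrt (16 - 9 * (tan w)^2) = 4 * sqrt (1 - u^2)" by (simp only: e)
    have "sqrt (1 - u^2) > 0" using u by (simp add: abs_square_less_1)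
    then show ?thesis unfolding dens_def s using t0 by (simp add: field_simps)
  qed
  ultimately show ?thesis by simp
qed

lemma dens_cont:
  assumes "0 < w" "w < arctan (4/3)"
  shows "isCont dens w"
proof -
  have t0: "0 \<le> tan w" "tan w < 4/3" "cos w > 0" using tan_range[of w] assms by auto
  have "16 - 9 * (tan w)^2 > 0"
  proof -
    have "(3 * tan w)^2 < 4^2" using t0 by (intro power_strict_mono) auto
    then show ?thesis by (simp add: power_mult_distrib)
  qed
  then show ?thesis unfolding dens_def using t0
    by (auto intro!: continuous_intros simp: tan_def)
qed

lemma dens_nn:
  assumes "0 < w" "w < arctan (4/3)"
  shows "0 \<le> dens w"
proof -
  have t0: "0 \<le> tan w" "tan w < 4/3" "cos w > 0" using tan_range[of w] assms by auto
  have "(3 * tan w)^2 < 4^2" using t0 by (intro power_strict_mono) auto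
  then have "16 - 9 * (tan w)^2 > 0" by (simp add: power_mult_distrib)
  then show ?thesis unfolding dens_def by simp
qed

lemma Fcdf_left: "(Fcdf \<longlongrightarrow> 0) (at_left (arctan (4/3)))"
proof -
  have "((\<lambda>w. 3/4 * tan w) \<longlongrightarrow> 3/4 * tan (arctan (4/3))) (at_left (arctan (4/3)))"
    using U_props by (intro tendsto_intros) auto
  then have t: "((\<lambda>w. 3/4 * tan w) \<longlongrightarrow> 1) (at_left (arctan (4/3)))" using U_props by simp
  have ev: "eventually (\<lambda>w. 3/4 * tan w \<in> {-1..1}) (at_left (arctan (4/3)))"
  proof (rule eventually_at_leftI[of 0])
    fix w assume "w \<in> {0<..<arctan (4/3::real)}"
    then show "3/4 * tan w \<in> {-1..1}" using tan_range[of w] by auto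
  qed (use U_props in auto)
  have "((\<lambda>w. arccos (3/4 * tan w)) \<longlongrightarrow> arccos 1) (at_left (arctan (4/3)))"
    by (rule continuous_on_tendsto_compose[OF continuous_on_arccos' t _ ev]) auto
  then have "((\<lambda>w. - (2/pi) * arccos (3/4 * tan w)) \<longlongrightarrow> - (2/pi) * arccos 1) (at_left (arctan (4/3)))"
    by (intro tendsto_intros)
  then show ?thesis unfolding Fcdf_def by simp
qed

lemma Fcdf_right:
  assumes "0 \<le> y" "y < arctan (4/3)"
  shows "(Fcdf \<longlongrightarrow> Fcdf y) (at_right y)"
proof -
  have t0: "0 \<le> tan y" "tan y < 4/3" "cos y > 0" using tan_range[of y] assms by auto
  have aux: "- 4 < 3 * tan y" "3 * tan y < 4" "cos y \<noteq> 0" using t0 by auto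
  have "isCont Fcdf y" unfolding Fcdf_def using aux
    by (auto intro!: continuous_intros isCont_arccos[THEN isCont_o2[rotated]] isCont_tan)
  then show ?thesis by (simp add: isCont_def filterlim_at_split)
qed

lemma dens_integral:
  assumes "0 \<le> y" "y < arctan (4/3)"
  shows "(\<integral>\<^sup>+ t. ennreal (indicator {y<..<arctan (4/3)} t * dens t) \<partial>lborel)
    = ennreal (2/pi * arccos (3/4 * tan y))"
proof -
  note ftc = interval_integral_FTC_nonneg[of "ereal y" "ereal (arctan (4/3))" Fcdf dens "Fcdf y" 0]
  have hyps: "ereal y < ereal (arctan (4/3))" using assms by simp
  have fa: "((Fcdf \<circ> real_of_ereal) \<longlongrightarrow> Fcdf y) (at_right (ereal y))"
    using Fcdf_right[OF assms] by (simp add: ereal_tendsto_simps1)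
  have fb: "((Fcdf \<circ> real_of_ereal) \<longlongrightarrow> 0) (at_left (ereal (arctan (4/3))))"
    using Fcdf_left by (simp add: ereal_tendsto_simps1)
  have de: "\<And>x. ereal y < ereal x \<Longrightarrow> ereal x < ereal (arctan (4/3)) \<Longrightarrow> (Fcdf has_real_derivative dens x) (at x)"
    using assms by (intro Fcdf_deriv) auto
  have co: "\<And>x. ereal y < ereal x \<Longrightarrow> ereal x < ereal (arctan (4/3)) \<Longrightarrow> isCont dens x"
    using assms by (intro dens_cont) auto
  have si: "set_integrable lborel {y<..<arctan (4/3)} dens"
    using ftc(1)[OF hyps de co _ fa fb] dens_nn assms by simp
  have iv: "(LBINT x=ereal y..ereal (arctan (4/3)). dens x) = 0 - Fcdf y"
    using ftc(2)[OF hyps de co _ fa fb] dens_nn assms by simp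
  have "(LBINT x=ereal y..ereal (arctan (4/3)). dens x) = (LINT x : {y<..<arctan (4/3)} | lborel. dens x)"
    using interval_lebesgue_integral_le_eq[of "ereal y" "ereal (arctan (4/3))" lborel dens] assms by simp
  then have "(LINT x : {y<..<arctan (4/3)} | lborel. dens x) = 2/pi * arccos (3/4 * tan y)"
    using iv by (simp add: Fcdf_def)
  moreover have "(\<integral>\<^sup>+ t. ennreal (indicator {y<..<arctan (4/3)} t * dens t) \<partial>lborel)
      = ennreal (LINT x : {y<..<arctan (4/3)} | lborel. dens x)"
    using si unfolding set_integrable_def set_lebesgue_integral_def
    by (subst nn_integral_eq_integral[symmetric]) (use assms in \<open>auto simp: dens_nn indicator_def\<close>)
  ultimately show ?thesis by simp
qed



lemma Omega_meas: "Omega \<in> borel_measurable borel"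
  using Omega_cont by (rule borel_measurable_continuous_onI)

lemma sets_theta: "sets theta_space = sets borel"
  unfolding theta_space_def by simp

lemma space_theta: "space theta_space = UNIV"
  unfolding theta_space_def by simp

lemma prob_theta: "prob_space theta_space"
  unfolding theta_space_def by (rule prob_space_uniform_measure) auto

lemma tan_meas[measurable]: "(tan :: real \<Rightarrow> real) \<in> borel_measurable borel"
proof -
  have "(tan :: real \<Rightarrow> real) = (\<lambda>x. sin x / cos x)" by (rule ext) (simp add: tan_def)
  moreover have "(\<lambda>x::real. sin x / cos x) \<in> borel_measurable borel" by measurable
  ultimately show ?thesis by simp
qed

lemma dens_meas: "(\<lambda>w. indicator {0<..<arctan (4/3)} w * dens w) \<in> borel_measurable borel"
  unfolding dens_def by measurable

lemma theta_emeasure: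
  assumes "B \<in> sets borel"
  shows "emeasure theta_space B = emeasure lborel ({0..<2*pi} \<inter> B) / ennreal (2*pi)"
  unfolding theta_space_def using assms by (subst emeasure_uniform_measure) auto

definition cdfv :: "real \<Rightarrow> ennreal" where
  "cdfv x = (if arctan (4/3) \<le> x then 0 else ennreal (2/pi * arccos (3/4 * tan (max x 0))))"

lemma Omega_le: "Omega t \<le> arctan (4/3)"
  unfolding Omega_eq by (simp add: arctan_le_iff)

lemma lhs_val: "emeasure (distr theta_space lborel Omega) {x<..} = cdfv x"
proof -
  have Om: "Omega \<in> measurable theta_space lborel"
  proof -
    have "measurable theta_space lborel = measurable borel borel"
      by (rule measurable_cong_sets[OF sets_theta sets_lborel])
    then show ?thesis using Omega_meas by metis
  qed
  have "emeasure (distr theta_space lborel Omega) {x<..} = emeasure theta_space (Omega -` {x<..} \<inter> space theta_space)"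
    by (rule emeasure_distr[OF Om]) simp
  also have "\<dots> = emeasure lborel ({0..<2*pi} \<inter> {t. x < Omega t}) / ennreal (2*pi)"
  proof -
    have "Omega -` {x<..} \<inter> space theta_space = {t. x < Omega t}" by (auto simp: space_theta)
    moreover have "{t. x < Omega t} \<in> sets borel" using Omega_meas by measurable
    ultimately show ?thesis using theta_emeasure by simp
  qed
  also have "\<dots> = cdfv x"
  proof (cases "arctan (4/3) \<le> x")
    case True
    then have "{t. x < Omega t} = {}" using Omega_le by (metis (mono_tags, lifting) Collect_empty_eq leD order.trans)
    then show ?thesis using True by (simp add: cdfv_def)
  next
    case False
    show ?thesis
    proof (cases "x < 0")
      case True
      have "{0..<2*pi} \<inter> {t. x < Omega t} = {0..<2*pi}"
        using True Omega_nn by (auto intro: less_le_trans)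
      moreover have "ennreal (2*pi) / ennreal (2*pi) = 1"
        by (rule ennreal_divide_self) auto
      ultimately show ?thesis using True False by (simp add: cdfv_def)
    next
      case x0: False
      then have x0': "0 \<le> x" by simp
      have xU: "x < arctan (4/3)" using False by simp
      have t0: "0 \<le> tan x" "tan x < 4/3" "cos x > 0" using tan_range[OF x0' xU] by auto
      define a where "a = arccos (3/4 * tan x)"
      have ca: "cos a = 3/4 * tan x" unfolding a_def using t0 by (intro cos_arccos) auto
      have a1: "0 < a" unfolding a_def using t0 arccos_lt_bounded[of "3/4 * tan x"] by auto
      have a2: "a \<le> pi/2" unfolding a_def using t0 by (intro arccos_le_pi2) auto
      have xa: "arctan (tan x) = x" using x0' xU U_props by (intro arctan_tan) auto
      have "{t. x < Omega t} = {t. cos a < \<bar>cos t\<bar>}"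
      proof -
        have "x < Omega t \<longleftrightarrow> cos a < \<bar>cos t\<bar>" for t
        proof -
          have "x < Omega t \<longleftrightarrow> arctan (tan x) < arctan (4/3 * \<bar>cos t\<bar>)" unfolding Omega_eq xa ..
          also have "\<dots> \<longleftrightarrow> tan x < 4/3 * \<bar>cos t\<bar>" by (rule arctan_less_iff)
          also have "\<dots> \<longleftrightarrow> cos a < \<bar>cos t\<bar>" unfolding ca by auto
          finally show ?thesis .
        qed
        then show ?thesis by auto
      qed
      then have "{0..<2*pi} \<inter> {t. x < Omega t} = {0..<a} \<union> {pi-a<..<pi+a} \<union> {2*pi-a<..<2*pi}"
        using cos_abs_set[OF a1 a2] by auto
      then have "emeasure lborel ({0..<2*pi} \<inter> {t. x < Omega t}) = ennreal (4*a)"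
        using measure_cos_abs_set[OF a1 a2] by simp
      moreover have "ennreal (4*a) / ennreal (2*pi) = ennreal (2/pi * a)"
        using a1 by (subst divide_ennreal) (auto simp: field_simps)
      ultimately show ?thesis using False x0' by (simp add: cdfv_def a_def)
    qed
  qed
  finally show ?thesis .
qed

lemma rhs_val: "emeasure (density lborel (\<lambda>w. ennreal (indicator {0<..<arctan (4/3)} w * dens w))) {x<..} = cdfv x"
proof -
  have "emeasure (density lborel (\<lambda>w. ennreal (indicator {0<..<arctan (4/3)} w * dens w))) {x<..}
     = (\<integral>\<^sup>+ t. ennreal (indicator {0<..<arctan (4/3)} t * dens t) * indicator {x<..} t \<partial>lborel)"
    by (rule emeasure_density) (use dens_meas in auto)
  also have "\<dots> = cdfv x"
  proof (cases "arctan (4/3) \<le> x")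
    case True
    have "(\<integral>\<^sup>+ t. ennreal (indicator {0<..<arctan (4/3)} t * dens t) * indicator {x<..} t \<partial>lborel)
        = (\<integral>\<^sup>+ t. (0::ennreal) \<partial>(lborel::real measure))"
      by (rule nn_integral_cong) (use True in \<open>auto simp: indicator_def\<close>)
    then show ?thesis using True by (simp add: cdfv_def)
  next
    case False
    define y where "y = max x 0"
    have y: "0 \<le> y" "y < arctan (4/3)" using False U_props by (auto simp: y_def)
    have "(\<integral>\<^sup>+ t. ennreal (indicator {0<..<arctan (4/3)} t * dens t) * indicator {x<..} t \<partial>lborel)
        = (\<integral>\<^sup>+ t. ennreal (indicator {y<..<arctan (4/3)} t * dens t) \<partial>lborel)"
      by (rule nn_integral_cong) (auto simp: indicator_def y_def)
    also have "\<dots> = ennreal (2/pi * arccos (3/4 * tan y))" by (rule dens_integral[OF y])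
    finally show ?thesis using False by (simp add: cdfv_def y_def)
  qed
  finally show ?thesis .
qed



lemma Om_meas: "Omega \<in> measurable theta_space lborel"
proof -
  have "measurable theta_space lborel = measurable borel borel"
    by (rule measurable_cong_sets[OF sets_theta sets_lborel])
  then show ?thesis using Omega_meas by metis
qed

lemma fD_meas: "(\<lambda>w. ennreal (indicator {0<..<arctan (4/3)} w * dens w)) \<in> borel_measurable lborel"
proof -
  have "(\<lambda>w. ennreal (indicator {0<..<arctan (4/3)} w * dens w)) \<in> borel_measurable borel"
    using dens_meas by (rule measurable_compose) simp
  then show ?thesis by (simp add: measurable_lborel1)
qed

lemma dist_main:
  "distributed theta_space lborel Omega
        (\<lambda>\<omega>. ennreal (indicator {0<..<2 * arctan (1/2)} \<omega> *
              (6/pi * (1 / ((cos \<omega>)^2 * sqrt (16 - 9 * (tan \<omega>)^2))))))"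
proof -
  have fd: "(\<lambda>\<omega>. ennreal (indicator {0<..<2 * arctan (1/2)} \<omega> *
              (6/pi * (1 / ((cos \<omega>)^2 * sqrt (16 - 9 * (tan \<omega>)^2))))))
     = (\<lambda>w. ennreal (indicator {0<..<arctan (4/3)} w * dens w))"
    by (simp add: U_eq dens_def)
  have "distr theta_space lborel Omega = density lborel (\<lambda>w. ennreal (indicator {0<..<arctan (4/3)} w * dens w))"
  proof (rule measure_eqI_lessThan)
    show "sets (distr theta_space lborel Omega) = sets borel" by simp
    show "sets (density lborel (\<lambda>w. ennreal (indicator {0<..<arctan (4/3)} w * dens w))) = sets borel" by simp
    fix x :: real
    have ps: "prob_space (distr theta_space lborel Omega)"
      by (rule prob_space.prob_space_distr[OF prob_theta Om_meas])
    have le1: "emeasure (distr theta_space lborel Omega) {x<..} \<le> 1"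
      by (rule prob_space.emeasure_le_1[OF ps])
    show "emeasure (distr theta_space lborel Omega) {x<..} < \<infinity>"
      by (rule le_less_trans[OF le1]) simp
    show "emeasure (distr theta_space lborel Omega) {x<..} =
       emeasure (density lborel (\<lambda>w. ennreal (indicator {0<..<arctan (4/3)} w * dens w))) {x<..}"
      by (simp only: lhs_val rhs_val)
  qed
  then show ?thesis unfolding distributed_def fd using fD_meas Om_meas by blast
qed


theorem mainTheorem5:
  shows "(\<forall>\<theta>. Omega \<theta> = arctan (4/3 * \<bar>cos \<theta>\<bar>))
    \<and> integral\<^sup>L theta_space Omega
        = 1 / (3*pi) * (pi^2 - 6 * (ln 2)^2 - 3 * Li2 (1/4))
    \<and> integral\<^sup>L theta_space (\<lambda>\<theta>. (Omega \<theta>)^2) = Li2 (1/4) - Li2 (-1/4)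
    \<and> distributed theta_space lborel Omega
        (\<lambda>\<omega>. ennreal (indicator {0<..<2 * arctan (1/2)} \<omega> *
              (6/pi * (1 / ((cos \<omega>)^2 * sqrt (16 - 9 * (tan \<omega>)^2))))))"
  using Omega_eq mean_result second_result dist_main by blast

end
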